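(* Let $a:\mathbb{R}^n\to\mathbb{R}^m$ be differentiable with each component $a_i$ convex, and let $w\in\mathbb{R}^m$, $w\ge0$. Let $(x,s,y)$ be a point with $s,y\ge0$, $y^Ta(x)>0$ and $\Gamma_{\mathrm{far}}(x,y)\le1/(2R)$ for some $R\in(0,\infty)$, and suppose some minimizer $(\mu^*,x^* )$ (with corresponding $s^*$) of the problem $\min_{x,s,\mu}\mu$ subject to $a(x)+s=\mu w$, $s\ge0$, $\mu\ge0$ satisfies $\|x-x^*\|_\infty\le R$. Then the system $a(x)\le0$ has no solution $x\in\mathbb{R}^n$.
   Context: $\Gamma_{\mathrm{far}}(x,y)=\dfrac{\|\nabla a(x)^Ty\|_1}{a(x)^Ty}$, where $\nabla a(x)$ is the $m\times n$ Jacobian of $a$ at $x$. *)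

theory Defs
  imports "HOL-Analysis.Analysis"
begin

definition norm1 :: "real ^ 'k \<Rightarrow> real" where
  "norm1 v = (\<Sum>i\<in>UNIV. \<bar>v $ i\<bar>)"

definition Gamma_far :: "(real ^ 'n \<Rightarrow> real ^ 'm) \<Rightarrow> real ^ 'n \<Rightarrow> real ^ 'm \<Rightarrow> real" where
  "Gamma_far a x y = norm1 (transpose (jacobian a (at x)) *v y) / (a x \<bullet> y)"

definition phase1_feasible ::
  "(real ^ 'n \<Rightarrow> real ^ 'm) \<Rightarrow> real ^ 'm \<Rightarrow> real \<Rightarrow> real ^ 'n \<Rightarrow> real ^ 'm \<Rightarrow> bool" where
  "phase1_feasible a w \<mu> x s \<longleftrightarrow> a x + s = \<mu> *\<^sub>R w \<and> (\<forall>i. s $ i \<ge> 0) \<and> \<mu> \<ge> 0"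

definition phase1_minimizer ::
  "(real ^ 'n \<Rightarrow> real ^ 'm) \<Rightarrow> real ^ 'm \<Rightarrow> real \<Rightarrow> real ^ 'n \<Rightarrow> real ^ 'm \<Rightarrow> bool" where
  "phase1_minimizer a w \<mu> x s \<longleftrightarrow> phase1_feasible a w \<mu> x s \<and>
     (\<forall>\<mu>' x' s'. phase1_feasible a w \<mu>' x' s' \<longrightarrow> \<mu> \<le> \<mu>')"

end

theory Submission
  imports Defs
begin

theorem mainTheorem8:
  fixes a :: "real ^ 'n \<Rightarrow> real ^ 'm"
    and w :: "real ^ 'm"
    and x :: "real ^ 'n" and s y :: "real ^ 'm"
    and R :: real
    and \<mu>star :: real and xstar :: "real ^ 'n" and sstar :: "real ^ 'm"
  assumes diff: "\<And>z. a differentiable (at z)"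
    and conv: "\<And>i. convex_on UNIV (\<lambda>z. a z $ i)"
    and w_nonneg: "\<And>i. w $ i \<ge> 0"
    and s_nonneg: "\<And>i. s $ i \<ge> 0"
    and y_nonneg: "\<And>i. y $ i \<ge> 0"
    and pos: "a x \<bullet> y > 0"
    and R_pos: "R > 0"
    and gamma: "Gamma_far a x y \<le> 1 / (2 * R)"
    and minim: "phase1_minimizer a w \<mu>star xstar sstar"
    and close: "infnorm (x - xstar) \<le> R"
  shows "\<not> (\<exists>z. \<forall>i. a z $ i \<le> 0)"
proof
  assume "\<exists>z. \<forall>i. a z $ i \<le> 0"
  then obtain z where z: "\<And>i. a z $ i \<le> 0" by blast
  have "phase1_feasible a w 0 z (- a z)"
    unfolding phase1_feasible_def using z by auto
  have m1: "phase1_feasible a w \<mu>star xstar sstar"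
    and m2: "\<And>\<mu>' x' s'. phase1_feasible a w \<mu>' x' s' \<Longrightarrow> \<mu>star \<le> \<mu>'"
    using minim unfolding phase1_minimizer_def by auto
  have "\<mu>star \<le> 0" using m2[OF \<open>phase1_feasible a w 0 z (- a z)\<close>] .
  moreover have "\<mu>star \<ge> 0" using m1 unfolding phase1_feasible_def by simp
  ultimately have mu0: "\<mu>star = 0" by simp
  with m1 have e: "a xstar + sstar = 0" and ss: "\<forall>i. sstar $ i \<ge> 0"
    unfolding phase1_feasible_def by auto
  have axs: "a xstar $ i \<le> 0" for i
  proof -
    have "(a xstar + sstar) $ i = 0" using e by simp
    then have "a xstar $ i + sstar $ i = 0" by simp
    moreover have "sstar $ i \<ge> 0" using ss by blast
    ultimately show ?thesis by linarith
  qed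
  define F where "F v = a v \<bullet> y" for v
  have Fsum: "F v = (\<Sum>i\<in>UNIV. a v $ i * y $ i)" for v
    unfolding F_def inner_vec_def by simp
  have Fxs: "F xstar \<le> 0"
    unfolding Fsum by (intro sum_nonpos) (simp add: axs y_nonneg mult_nonpos_nonneg)
  define J where "J = jacobian a (at x)"
  define G where "G = transpose J *v y"
  define d where "d = xstar - x"
  have ader: "(a has_derivative (\<lambda>h. J *v h)) (at x)"
    using diff jacobian_works J_def by blast
  have Fder: "(F has_derivative (\<lambda>h. (J *v h) \<bullet> y)) (at x)"
    unfolding F_def using ader by (auto intro!: derivative_eq_intros)
  define \<phi> where "\<phi> t = F (x + t *\<^sub>R d)" for t :: real
  have phider: "(\<phi> has_field_derivative ((J *v d) \<bullet> y)) (at 0)"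
  proof -
    have l: "((\<lambda>t. x + t *\<^sub>R d) has_derivative (\<lambda>t. t *\<^sub>R d)) (at 0)"
      by (intro derivative_eq_intros) auto
    have "(\<phi> has_derivative (\<lambda>t. (J *v (t *\<^sub>R d)) \<bullet> y)) (at 0)"
      unfolding \<phi>_def using has_derivative_compose[OF l, of F] Fder
      by (simp add: o_def)
    moreover have "(\<lambda>t. (J *v (t *\<^sub>R d)) \<bullet> y) = (*) ((J *v d) \<bullet> y)"
      by (rule ext) (simp add: matrix_vector_mult_scaleR)
    ultimately show ?thesis
      unfolding has_field_derivative_def by simp
  qed
  have convF: "F (u *\<^sub>R p + v *\<^sub>R q) \<le> u * F p + v * F q"
    if "u \<ge> 0" "v \<ge> 0" "u + v = 1" for u v p q
  proof -
    have "F (u *\<^sub>R p + v *\<^sub>R q) = (\<Sum>i\<in>UNIV. a (u *\<^sub>R p + v *\<^sub>R q) $ i * y $ i)" by (rule Fsum)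
    also have "\<dots> \<le> (\<Sum>i\<in>UNIV. (u * a p $ i + v * a q $ i) * y $ i)"
    proof (rule sum_mono)
      fix i
      have "a (u *\<^sub>R p + v *\<^sub>R q) $ i \<le> u * a p $ i + v * a q $ i"
        using conv[of i] that unfolding convex_on_def by blast
      then show "a (u *\<^sub>R p + v *\<^sub>R q) $ i * y $ i \<le> (u * a p $ i + v * a q $ i) * y $ i"
        using y_nonneg[of i] by (simp add: mult_right_mono)
    qed
    also have "\<dots> = u * F p + v * F q"
      unfolding Fsum by (simp add: sum_distrib_left sum.distrib algebra_simps)
    finally show ?thesis .
  qed
  have convphi: "convex_on UNIV \<phi>"
    unfolding convex_on_def
  proof (intro conjI ballI allI impI)
    fix p q u v :: real assume "u \<ge> 0" "v \<ge> 0" "u + v = 1"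
    have "x + (u *\<^sub>R p + v *\<^sub>R q) *\<^sub>R d = u *\<^sub>R (x + p *\<^sub>R d) + v *\<^sub>R (x + q *\<^sub>R d)"
    proof -
      have "x = u *\<^sub>R x + v *\<^sub>R x" using \<open>u + v = 1\<close>
        by (metis scaleR_add_left scaleR_one)
      then show ?thesis by (simp add: algebra_simps)
    qed
    then show "\<phi> (u *\<^sub>R p + v *\<^sub>R q) \<le> u * \<phi> p + v * \<phi> q"
      unfolding \<phi>_def using convF[OF \<open>u \<ge> 0\<close> \<open>v \<ge> 0\<close> \<open>u + v = 1\<close>] by simp
  qed auto
  have tang: "\<phi> 1 - \<phi> 0 \<ge> ((J *v d) \<bullet> y) * (1 - 0)"
    by (rule convex_on_imp_above_tangent[OF convphi]) (auto simp: has_field_derivative_at_within phider)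
  then have tang': "\<phi> 1 - \<phi> 0 \<ge> (J *v d) \<bullet> y" by simp
  have phi1: "\<phi> 1 = F xstar" and phi0: "\<phi> 0 = F x"
    unfolding \<phi>_def d_def by auto
  have dG: "(J *v d) \<bullet> y = d \<bullet> G"
    unfolding G_def by (metis dot_lmul_matrix inner_commute vector_transpose_matrix)
  have "\<bar>d \<bullet> G\<bar> \<le> (\<Sum>i\<in>UNIV. \<bar>d $ i\<bar> * \<bar>G $ i\<bar>)"
    unfolding inner_vec_def by (rule order_trans[OF sum_abs]) (simp add: abs_mult)
  also have "\<dots> \<le> (\<Sum>i\<in>UNIV. R * \<bar>G $ i\<bar>)"
  proof (rule sum_mono)
    fix i
    have "\<bar>d $ i\<bar> \<le> R"
      using component_le_infnorm_cart[of d i] close infnorm_sub[of x xstar] d_def by simp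
    then show "\<bar>d $ i\<bar> * \<bar>G $ i\<bar> \<le> R * \<bar>G $ i\<bar>" by (simp add: mult_right_mono)
  qed
  also have "\<dots> = R * norm1 G" unfolding norm1_def by (simp add: sum_distrib_left)
  finally have b1: "\<bar>d \<bullet> G\<bar> \<le> R * norm1 G" .
  have "norm1 G / F x \<le> 1 / (2 * R)"
    using gamma unfolding Gamma_far_def G_def J_def F_def .
  then have "norm1 G \<le> F x / (2 * R)"
    using pos unfolding F_def by (simp add: divide_le_eq mult.commute)
  then have "R * norm1 G \<le> F x / 2"
    using R_pos by (simp add: field_simps)
  moreover have "- \<bar>d \<bullet> G\<bar> \<le> d \<bullet> G" by simp
  ultimately show False using b1 tang' phi1 phi0 dG Fxs pos
    unfolding F_def by linarith
qed

end
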